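(* Let $(Q,\cdot)$ be a quadratical quasigroup and $a,b\in Q$ distinct. Then for every integer $t>1$ and every $k\in\{1,2,3,4\}$, $aba\cdot tk=(t-1)k$.
   Context: A quadratical quasigroup is a quasigroup satisfying $xy\cdot x=zx\cdot yz$ (equivalently, a groupoid satisfying $x\cdot x=x$, $yx\cdot xy=x$, $xy\cdot zw=xz\cdot yw$). $aba$ denotes $ab\cdot a$. The elements $tk$ are defined by $11=a$, $12=ab$, $13=ba$, $14=b$ and, for $n\ge2$, $n1=(n-1)1\cdot(n-1)2$, $n2=(n-1)2\cdot(n-1)4$, $n3=(n-1)3\cdot(n-1)1$, $n4=(n-1)4\cdot(n-1)3$. *)

theory Defs
  imports Main
begin

definition quasigroup :: "('a \<Rightarrow> 'a \<Rightarrow> 'a) \<Rightarrow> bool" where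
  "quasigroup m \<longleftrightarrow> (\<forall>a b. \<exists>!x. m a x = b) \<and> (\<forall>a b. \<exists>!y. m y a = b)"

definition quadratical :: "('a \<Rightarrow> 'a \<Rightarrow> 'a) \<Rightarrow> bool" where
  "quadratical m \<longleftrightarrow> quasigroup m \<and>
     (\<forall>x y z. m (m x y) x = m (m z x) (m y z))"

text \<open>telem m a b t : the quadruple (t1, t2, t3, t4) for t >= 1
  (the value at t = 0 is an unused dummy, set equal to the t = 1 values).\<close>
fun telem :: "('a \<Rightarrow> 'a \<Rightarrow> 'a) \<Rightarrow> 'a \<Rightarrow> 'a \<Rightarrow> nat \<Rightarrow> 'a \<times> 'a \<times> 'a \<times> 'a" where
  "telem m a b 0 = (a, m a b, m b a, b)"
| "telem m a b (Suc 0) = (a, m a b, m b a, b)"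
| "telem m a b (Suc (Suc n)) =
     (case telem m a b (Suc n) of (x1, x2, x3, x4) \<Rightarrow>
        (m x1 x2, m x2 x4, m x3 x1, m x4 x3))"

definition tk :: "('a \<Rightarrow> 'a \<Rightarrow> 'a) \<Rightarrow> 'a \<Rightarrow> 'a \<Rightarrow> nat \<Rightarrow> nat \<Rightarrow> 'a" where
  "tk m a b t k = (case telem m a b t of (x1, x2, x3, x4) \<Rightarrow>
      (if k = 1 then x1 else if k = 2 then x2 else if k = 3 then x3 else x4))"

end

theory Submission
  imports Defs
begin

lemma quad_laws:
  assumes "quadratical m"
  shows "\<And>x. m x x = x" and "\<And>x y z w. m (m x y) (m z w) = m (m x z) (m y w)"
    and "\<And>x y. m (m y x) (m x y) = x"
proof -
  have A: "\<And>x y z. m (m x y) x = m (m z x) (m y z)" using assms unfolding quadratical_def by blast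
  have q: "quasigroup m" using assms unfolding quadratical_def by blast
  define l where "l = (\<lambda>x y. SOME z. m x z = y)"
  have l1: "\<And>x y. m x (l x y) = y"
    unfolding l_def using q unfolding quasigroup_def by (metis (mono_tags, lifting) someI_ex)
  have l2: "\<And>x y. l x (m x y) = y"
    using q l1 unfolding quasigroup_def by metis
  define r where "r = (\<lambda>y x. SOME z. m z x = y)"
  have r1: "\<And>x y. m (r y x) x = y"
    unfolding r_def using q unfolding quasigroup_def by (metis (mono_tags, lifting) someI_ex)
  have I: "\<And>x. m x x = x" by (metis A l2)
  show "\<And>x. m x x = x" by (rule I)
  show "\<And>x y z w. m (m x y) (m z w) = m (m x z) (m y w)" by (metis A I l2 r1)
  show "\<And>x y. m (m y x) (m x y) = x" using A I by simp
qed

theorem proposition3p6: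
  fixes m :: "'a \<Rightarrow> 'a \<Rightarrow> 'a" and a b :: 'a and t k :: nat
  assumes "quadratical m" and "a \<noteq> b" and "t > 1" and "k \<in> {1, 2, 3, 4}"
  shows "m (m (m a b) a) (tk m a b t k) = tk m a b (t - 1) k"
proof -
  note I = quad_laws(1)[OF assms(1)]
  note M = quad_laws(2)[OF assms(1)]
  note E = quad_laws(3)[OF assms(1)]
  have A: "\<And>x y z. m (m x y) x = m (m z x) (m y z)" using assms(1) unfolding quadratical_def by blast
  define c where "c = m (m a b) a"
  have hom: "\<And>x y. m c (m x y) = m (m c x) (m c y)" by (metis I M)
  have key: "map_prod (m c) (map_prod (m c) (map_prod (m c) (m c))) (telem m a b (Suc (Suc n)))
     = telem m a b (Suc n)" for n
  proof (induction n)
    case 0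
    have 1: "m c (m a (m a b)) = a" unfolding c_def by (metis E I M)
    have 2: "m c (m (m a b) b) = m a b" unfolding c_def by (metis I M)
    have 3: "m c (m (m b a) a) = m b a" unfolding c_def by (metis A I)
    have 4: "m c (m b (m b a)) = b" unfolding c_def by (metis E I M)
    show ?case using 1 2 3 4 by simp
  next
    case (Suc n)
    obtain x1 x2 x3 x4 where e: "telem m a b (Suc (Suc n)) = (x1,x2,x3,x4)" by (cases "telem m a b (Suc (Suc n))") auto
    obtain y1 y2 y3 y4 where f: "telem m a b (Suc n) = (y1,y2,y3,y4)" by (cases "telem m a b (Suc n)") auto
    from Suc e f have h: "m c x1 = y1" "m c x2 = y2" "m c x3 = y3" "m c x4 = y4" by auto
    have "telem m a b (Suc (Suc (Suc n))) = (m x1 x2, m x2 x4, m x3 x1, m x4 x3)"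
      using e by simp
    moreover have "telem m a b (Suc (Suc n)) = (m y1 y2, m y2 y4, m y3 y1, m y4 y3)"
      using f by (cases n) auto
    ultimately show ?case using h hom by simp
  qed
  obtain n where tn: "t = Suc (Suc n)" using assms(3) by (metis Suc_lessE One_nat_def less_imp_Suc_add add_Suc)
  obtain x1 x2 x3 x4 where e: "telem m a b (Suc (Suc n)) = (x1,x2,x3,x4)" by (cases "telem m a b (Suc (Suc n))") auto
  have "telem m a b (Suc n) = (m c x1, m c x2, m c x3, m c x4)" using key[of n] e by simp
  then show ?thesis using e tn assms(4) unfolding tk_def c_def[symmetric] by auto
qed

end
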